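(* Let $G$ be a cubic graph of order $2n$ and let $m$ be a positive integer. If $m<\left\lceil \frac{3n}{4}\right\rceil$, then $\chi'_{[m]}(G)=\left\lceil \frac{3n}{m}\right\rceil$.
   Context: All graphs are finite, simple (no loops, no parallel edges), connected and cubic (3-regular). For a positive integer $m$, an $[m]$-matching of $G$ is a matching of $G$ with exactly $m$ edges. The excessive $[m]$-index $\chi'_{[m]}(G)$ is the minimum number of $[m]$-matchings of $G$ whose union is $E(G)$ (a covering of $E(G)$ by $[m]$-matchings); if some edge of $G$ lies in no $[m]$-matching, one sets $\chi'_{[m]}(G)=\infty$. *)

theory Defs
  imports Main "HOL-Library.Extended_Nat"
begin

definition simple_graph :: "'a set \<Rightarrow> 'a set set \<Rightarrow> bool" where
  "simple_graph V E \<longleftrightarrow> finite V \<and> (\<forall>e\<in>E. \<exists>u v. u \<noteq> v \<and> u \<in> V \<and> v \<in> V \<and> e = {u, v})"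

definition degree :: "'a set set \<Rightarrow> 'a \<Rightarrow> nat" where
  "degree E v = card {e\<in>E. v \<in> e}"

definition cubic :: "'a set \<Rightarrow> 'a set set \<Rightarrow> bool" where
  "cubic V E \<longleftrightarrow> (\<forall>v\<in>V. degree E v = 3)"

definition adj :: "'a set set \<Rightarrow> 'a \<Rightarrow> 'a \<Rightarrow> bool" where
  "adj E u v \<longleftrightarrow> {u, v} \<in> E"

definition connected_graph :: "'a set \<Rightarrow> 'a set set \<Rightarrow> bool" where
  "connected_graph V E \<longleftrightarrow> V \<noteq> {} \<and> (\<forall>u\<in>V. \<forall>v\<in>V. (adj E)\<^sup>*\<^sup>* u v)"

definition matching :: "'a set set \<Rightarrow> 'a set set \<Rightarrow> bool" where
  "matching E M \<longleftrightarrow> M \<subseteq> E \<and> (\<forall>e\<in>M. \<forall>f\<in>M. e \<noteq> f \<longrightarrow> e \<inter> f = {})"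

definition m_matching :: "'a set set \<Rightarrow> nat \<Rightarrow> 'a set set \<Rightarrow> bool" where
  "m_matching E m M \<longleftrightarrow> matching E M \<and> card M = m"

definition excessive_index :: "'a set set \<Rightarrow> nat \<Rightarrow> enat" where
  "excessive_index E m =
    (if \<exists>e\<in>E. \<not> (\<exists>M. m_matching E m M \<and> e \<in> M) then \<infinity>
     else enat (LEAST k. \<exists>\<F>. finite \<F> \<and> card \<F> = k \<and> (\<forall>M\<in>\<F>. m_matching E m M) \<and> \<Union>\<F> = E))"

end

theory Submission
  imports Defs
begin


definition adjc :: "('i \<Rightarrow> 'a set) \<Rightarrow> 'i \<Rightarrow> 'i \<Rightarrow> bool" where
  "adjc en i j \<longleftrightarrow> i \<noteq> j \<and> en i \<inter> en j \<noteq> {}"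
definition rk :: "('i \<Rightarrow> 'a set) \<Rightarrow> 'i set \<Rightarrow> 'i \<Rightarrow> 'i \<Rightarrow> bool" where
  "rk en K i j \<longleftrightarrow> i \<in> K \<and> j \<in> K \<and> adjc en i j"
definition conn :: "('i \<Rightarrow> 'a set) \<Rightarrow> 'i set \<Rightarrow> bool" where
  "conn en K \<longleftrightarrow> (\<forall>i\<in>K. \<forall>j\<in>K. (rk en K)\<^sup>*\<^sup>* i j)"
definition dg :: "('i \<Rightarrow> 'a set) \<Rightarrow> 'i set \<Rightarrow> 'a \<Rightarrow> nat" where
  "dg en K v = card {i\<in>K. v \<in> en i}"
definition leaves :: "('i \<Rightarrow> 'a set) \<Rightarrow> 'i set \<Rightarrow> 'a set" where
  "leaves en K = {v. dg en K v = 1}"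

lemma adjc_sym: "adjc en i j \<Longrightarrow> adjc en j i"
  by (auto simp: adjc_def)

lemma conn_remove:
  assumes c: "conn en K" and f: "f \<in> K" and g: "g \<in> K" "adjc en f g"
    and uniq: "\<forall>j\<in>K. adjc en f j \<longrightarrow> j = g"
  shows "conn en (K - {f})"
proof -
  have gf: "g \<noteq> f" using g by (auto simp: adjc_def)
  { fix i j assume i: "i \<in> K - {f}" and j: "j \<in> K - {f}"
    have "(rk en K)\<^sup>*\<^sup>* i j" using c i j by (auto simp: conn_def)
    then have "(j \<noteq> f \<longrightarrow> (rk en (K-{f}))\<^sup>*\<^sup>* i j) \<and> (j = f \<longrightarrow> (rk en (K-{f}))\<^sup>*\<^sup>* i g)"
    proof (induction rule: rtranclp_induct)
      case base then show ?case using i by auto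
    next
      case (step h h')
      have hh: "h \<in> K" "h' \<in> K" "adjc en h h'" using step(2) unfolding rk_def by auto
      have IH: "h \<noteq> f \<Longrightarrow> (rk en (K-{f}))\<^sup>*\<^sup>* i h" "h = f \<Longrightarrow> (rk en (K-{f}))\<^sup>*\<^sup>* i g"
        using step(3) by blast+
      show ?case
      proof (cases "h = f")
        case True
        have af: "adjc en f h'" using hh(3) True by simp
        then have "h' \<noteq> f" unfolding adjc_def by blast
        moreover have "h' = g" using uniq hh(2) af by blast
        ultimately show ?thesis using IH(2)[OF True] by simp
      next
        case False
        show ?thesis
        proof (cases "h' = f")
          case True
          have "adjc en f h" using hh(3) True adjc_sym by metis
          then have "h = g" using uniq hh(1) by blast
          then show ?thesis using IH(1)[OF False] True by simp
        next
          case False2: False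
          have r: "rk en (K-{f}) h h'" using hh False False2 unfolding rk_def by blast
          have "(rk en (K-{f}))\<^sup>*\<^sup>* i h'" using rtranclp.rtrancl_into_rtrancl[OF IH(1)[OF False] r] .
          then show ?thesis using False2 by simp
        qed
      qed
    qed
    then have "(rk en (K-{f}))\<^sup>*\<^sup>* i j" using j by auto }
  then show ?thesis by (auto simp: conn_def)
qed

lemma leaves_finite:
  assumes "finite K" "\<forall>i\<in>K. card (en i) = 2"
  shows "finite (leaves en K)"
proof -
  have "leaves en K \<subseteq> \<Union>(en ` K)"
  proof
    fix v assume "v \<in> leaves en K"
    then have "card {i\<in>K. v \<in> en i} = 1" by (simp add: leaves_def dg_def)
    then have "{i\<in>K. v \<in> en i} \<noteq> {}" by (metis card.empty zero_neq_one)
    then show "v \<in> \<Union>(en ` K)" by auto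
  qed
  moreover have "finite (\<Union>(en ` K))" using assms
    by (intro finite_UN_I) (auto intro: card_ge_0_finite)
  ultimately show ?thesis by (rule finite_subset)
qed

lemma leaves_le2:
  "finite K \<Longrightarrow> (\<forall>i\<in>K. card (en i) = 2) \<Longrightarrow> (\<forall>v. dg en K v \<le> 2) \<Longrightarrow> conn en K
   \<Longrightarrow> card (leaves en K) \<le> 2"
proof (induction "card K" arbitrary: K rule: less_induct)
  case less
  note fin = less.prems(1) and two = less.prems(2) and deg = less.prems(3) and cn = less.prems(4)
  have finL: "finite (leaves en K)" using leaves_finite fin two by blast
  show ?case
  proof (cases "leaves en K = {}")
    case True then show ?thesis by simp
  next
    case False
    then obtain x where x: "x \<in> leaves en K" by auto
    then have "card {i\<in>K. x \<in> en i} = 1" by (simp add: leaves_def dg_def)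
    then obtain f where f: "{i\<in>K. x \<in> en i} = {f}" by (rule card_1_singletonE)
    then have fK: "f \<in> K" and xf: "x \<in> en f" by auto
    have "card (en f) = 2" using two fK by auto
    then obtain y where efxy: "en f = {x,y}" and yx: "y \<noteq> x" using xf
      by (metis card_2_iff insert_commute insertE singletonD)
    show ?thesis
    proof (cases "K = {f}")
      case True
      have "leaves en K \<subseteq> en f"
      proof
        fix v assume "v \<in> leaves en K"
        then have "card {i\<in>K. v \<in> en i} = 1" by (simp add: leaves_def dg_def)
        then have "{i\<in>K. v \<in> en i} \<noteq> {}" by (metis card.empty zero_neq_one)
        then show "v \<in> en f" using True by auto
      qed
      then have "card (leaves en K) \<le> card (en f)"
        using efxy by (simp add: card_mono)
      then show ?thesis using \<open>card (en f) = 2\<close> by simp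
    next
      case False
      then obtain h where h: "h \<in> K" "h \<noteq> f" using fK by auto
      have "(rk en K)\<^sup>*\<^sup>* f h" using cn fK h by (auto simp: conn_def)
      then obtain g where g: "rk en K f g" using h(2)
        by (metis converse_rtranclpE)
      then have gK: "g \<in> K" and fg: "adjc en f g" by (auto simp: rk_def)
      have nb: "y \<in> en j \<and> j \<noteq> f" if "j \<in> K" "adjc en f j" for j
      proof -
        have jf: "j \<noteq> f" using that by (auto simp: adjc_def)
        have "x \<notin> en j" using f that jf by auto
        then show ?thesis using that jf efxy by (auto simp: adjc_def)
      qed
      have ygf: "y \<in> en g" "g \<noteq> f" using nb gK fg by auto
      have sub: "{f, g} \<subseteq> {i\<in>K. y \<in> en i}" using fK gK ygf efxy by auto
      have finy: "finite {i\<in>K. y \<in> en i}" using fin by auto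
      have dy: "dg en K y \<le> 2" using deg by auto
      have eqy: "{i\<in>K. y \<in> en i} = {f, g}"
      proof (rule ccontr)
        assume "{i\<in>K. y \<in> en i} \<noteq> {f, g}"
        then obtain j where "j \<in> {i\<in>K. y \<in> en i}" "j \<notin> {f,g}" using sub by blast
        then have "insert j {f,g} \<subseteq> {i\<in>K. y \<in> en i}" using sub by auto
        then have "card (insert j {f,g}) \<le> card {i\<in>K. y \<in> en i}" using card_mono[OF finy] by blast
        then have "card (insert j {f,g}) \<le> 2" using dy unfolding dg_def by linarith
        then show False using \<open>j \<notin> {f,g}\<close> ygf(2) by auto
      qed
      have uniq: "\<forall>j\<in>K. adjc en f j \<longrightarrow> j = g"
        using nb eqy by auto
      define K' where "K' = K - {f}"
      have cK': "conn en K'" unfolding K'_def using conn_remove[OF cn fK gK fg uniq] .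
      have lt: "card K' < card K" unfolding K'_def using card_Diff1_less[OF fin fK] .
      have dK': "\<forall>v. dg en K' v \<le> 2"
      proof
        fix v
        have "dg en K' v \<le> dg en K v" unfolding dg_def K'_def
          using fin by (intro card_mono) auto
        then show "dg en K' v \<le> 2" using deg le_trans by blast
      qed
      have IH: "card (leaves en K') \<le> 2"
        using less.hyps[OF lt] fin two dK' cK' unfolding K'_def by auto
      have finL': "finite (leaves en K')" using leaves_finite fin two unfolding K'_def by auto
      have yL': "y \<in> leaves en K'"
      proof -
        have "{i\<in>K'. y \<in> en i} = {g}" using eqy ygf unfolding K'_def by auto
        then show ?thesis by (simp add: leaves_def dg_def)
      qed
      have "leaves en K \<subseteq> insert x (leaves en K' - {y})"
      proof
        fix v assume v: "v \<in> leaves en K"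
        show "v \<in> insert x (leaves en K' - {y})"
        proof (cases "v = x")
          case True then show ?thesis by simp
        next
          case vx: False
          have vy: "v \<noteq> y"
          proof
            assume "v = y"
            then have "card {i\<in>K. y \<in> en i} = 1" using v by (simp add: leaves_def dg_def)
            then show False using eqy ygf by auto
          qed
          have "{i\<in>K'. v \<in> en i} = {i\<in>K. v \<in> en i}"
            unfolding K'_def using efxy vx vy by auto
          then show ?thesis using v vy by (simp add: leaves_def dg_def)
        qed
      qed
      then have "card (leaves en K) \<le> card (insert x (leaves en K' - {y}))"
        using finL' by (intro card_mono) auto
      also have "\<dots> \<le> Suc (card (leaves en K' - {y}))" by (simp add: card_insert_le_m1)
      also have "\<dots> = card (leaves en K')"
      proof -
        have "card (leaves en K') > 0" using yL' finL' card_gt_0_iff by blast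
        then show ?thesis using yL' finL' by (simp add: card_Diff_singleton)
      qed
      finally show ?thesis using IH by simp
    qed
  qed
qed




definition proper :: "('i \<Rightarrow> 'a set) \<Rightarrow> 'i set \<Rightarrow> ('i \<Rightarrow> nat) \<Rightarrow> bool" where
  "proper en X col \<longleftrightarrow> (\<forall>i\<in>X. \<forall>j\<in>X. adjc en i j \<longrightarrow> col i \<noteq> col j)"
definition abr :: "('i \<Rightarrow> 'a set) \<Rightarrow> 'i set \<Rightarrow> ('i \<Rightarrow> nat) \<Rightarrow> nat \<Rightarrow> nat \<Rightarrow> 'i \<Rightarrow> 'i \<Rightarrow> bool" where
  "abr en X col a b i j \<longleftrightarrow> i \<in> X \<and> j \<in> X \<and> col i \<in> {a,b} \<and> col j \<in> {a,b} \<and> adjc en i j"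
definition kcomp :: "('i \<Rightarrow> 'a set) \<Rightarrow> 'i set \<Rightarrow> ('i \<Rightarrow> nat) \<Rightarrow> nat \<Rightarrow> nat \<Rightarrow> 'i \<Rightarrow> 'i set" where
  "kcomp en X col a b i0 = {j. (abr en X col a b)\<^sup>*\<^sup>* i0 j}"
definition swapc :: "nat \<Rightarrow> nat \<Rightarrow> nat \<Rightarrow> nat" where
  "swapc a b c = (if c = a then b else if c = b then a else c)"
definition kswap :: "('i \<Rightarrow> nat) \<Rightarrow> 'i set \<Rightarrow> nat \<Rightarrow> nat \<Rightarrow> 'i \<Rightarrow> nat" where
  "kswap col K a b = (\<lambda>i. if i \<in> K then swapc a b (col i) else col i)"

lemma rtranclp_sym_gen:
  assumes "\<And>x y. r x y \<Longrightarrow> r y x" and "r\<^sup>*\<^sup>* x y" shows "r\<^sup>*\<^sup>* y x"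
  using assms(2)
proof (induction rule: rtranclp_induct)
  case base then show ?case by simp
next
  case (step y z)
  have "r z y" using assms(1) step(2) .
  then show ?case using step(3) by (simp add: converse_rtranclp_into_rtranclp)
qed

lemma abr_sym: "abr en X col a b i j \<Longrightarrow> abr en X col a b j i"
  unfolding abr_def using adjc_sym by metis

lemma comp_sub:
  assumes "i0 \<in> X" "col i0 \<in> {a,b}"
  shows "kcomp en X col a b i0 \<subseteq> {i\<in>X. col i \<in> {a,b}}" and "i0 \<in> kcomp en X col a b i0"
proof -
  show "i0 \<in> kcomp en X col a b i0" unfolding kcomp_def by simp
  show "kcomp en X col a b i0 \<subseteq> {i\<in>X. col i \<in> {a,b}}"
  proof
    fix j assume "j \<in> kcomp en X col a b i0"
    then have "(abr en X col a b)\<^sup>*\<^sup>* i0 j" unfolding kcomp_def by simp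
    then show "j \<in> {i\<in>X. col i \<in> {a,b}}"
    proof (cases rule: rtranclp.cases)
      case rtrancl_refl then show ?thesis using assms by simp
    next
      case (rtrancl_into_rtrancl y)
      then show ?thesis unfolding abr_def by simp
    qed
  qed
qed

lemma comp_closed:
  assumes "i0 \<in> X" "col i0 \<in> {a,b}" "i \<in> kcomp en X col a b i0" "j \<in> X" "col j \<in> {a,b}" "adjc en i j"
  shows "j \<in> kcomp en X col a b i0"
proof -
  have "i \<in> X" "col i \<in> {a,b}" using comp_sub(1)[of i0 X col a b en] assms by auto
  then have "abr en X col a b i j" using assms unfolding abr_def by simp
  moreover have "(abr en X col a b)\<^sup>*\<^sup>* i0 i" using assms(3) unfolding kcomp_def by simp
  ultimately show ?thesis unfolding kcomp_def by (simp add: rtranclp.rtrancl_into_rtrancl)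
qed

lemma comp_eq:
  assumes "i \<in> kcomp en X col a b j"
  shows "kcomp en X col a b i = kcomp en X col a b j"
proof -
  have ji: "(abr en X col a b)\<^sup>*\<^sup>* j i" using assms unfolding kcomp_def by simp
  have ij: "(abr en X col a b)\<^sup>*\<^sup>* i j" using rtranclp_sym_gen[OF abr_sym ji] .
  show ?thesis unfolding kcomp_def
  proof (intro set_eqI iffI; simp)
    fix k assume "(abr en X col a b)\<^sup>*\<^sup>* i k"
    then show "(abr en X col a b)\<^sup>*\<^sup>* j k" using ji by (simp add: rtranclp_trans)
  next
    fix k assume "(abr en X col a b)\<^sup>*\<^sup>* j k"
    then show "(abr en X col a b)\<^sup>*\<^sup>* i k" using ij by (simp add: rtranclp_trans)
  qed
qed

lemma comp_conn:
  assumes "i0 \<in> X" "col i0 \<in> {a,b}"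
  shows "conn en (kcomp en X col a b i0)"
proof -
  let ?C = "kcomp en X col a b i0"
  have rsym: "rk en ?C x y \<Longrightarrow> rk en ?C y x" for x y unfolding rk_def using adjc_sym by metis
  have fwd: "(rk en ?C)\<^sup>*\<^sup>* i0 j" if "j \<in> ?C" for j
  proof -
    have "(abr en X col a b)\<^sup>*\<^sup>* i0 j" using that unfolding kcomp_def by simp
    then show ?thesis
    proof (induction rule: rtranclp_induct)
      case base then show ?case by simp
    next
      case (step y z)
      have yC: "y \<in> ?C" using step(1) unfolding kcomp_def by simp
      have zC: "z \<in> ?C" using step(1,2) unfolding kcomp_def by (simp add: rtranclp.rtrancl_into_rtrancl)
      have "rk en ?C y z" using yC zC step(2) unfolding rk_def abr_def by simp
      then show ?case using step(3) by (simp add: rtranclp.rtrancl_into_rtrancl)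
    qed
  qed
  show ?thesis unfolding conn_def
  proof (intro ballI)
    fix i j assume "i \<in> ?C" "j \<in> ?C"
    have "(rk en ?C)\<^sup>*\<^sup>* i i0" using rtranclp_sym_gen[OF rsym fwd[OF \<open>i \<in> ?C\<close>]] .
    then show "(rk en ?C)\<^sup>*\<^sup>* i j" using fwd[OF \<open>j \<in> ?C\<close>] by (simp add: rtranclp_trans)
  qed
qed

lemma proper_class_le1:
  assumes "proper en X col" "finite X"
  shows "card {i\<in>X. col i = c \<and> v \<in> en i} \<le> 1"
proof -
  have "\<forall>x\<in>{i\<in>X. col i = c \<and> v \<in> en i}. \<forall>y\<in>{i\<in>X. col i = c \<and> v \<in> en i}. x = y"
  proof (intro ballI)
    fix x y assume x: "x \<in> {i\<in>X. col i = c \<and> v \<in> en i}" and y: "y \<in> {i\<in>X. col i = c \<and> v \<in> en i}"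
    show "x = y"
    proof (rule ccontr)
      assume "x \<noteq> y"
      then have "adjc en x y" using x y unfolding adjc_def by auto
      moreover have "x \<in> X" "y \<in> X" "col x = col y" using x y by auto
      ultimately show False using assms(1) unfolding proper_def by blast
    qed
  qed
  then show ?thesis using card_le_Suc0_iff_eq[of "{i\<in>X. col i = c \<and> v \<in> en i}"] assms(2) by simp
qed

lemma swapc_inj: "swapc a b x = swapc a b y \<Longrightarrow> x = y"
  unfolding swapc_def by (simp split: if_splits)

lemma swapc_in: "x \<in> {a,b} \<Longrightarrow> swapc a b x \<in> {a,b}"
  unfolding swapc_def by auto

lemma swap_proper:
  assumes pr: "proper en X col" and KS: "K \<subseteq> {i\<in>X. col i \<in> {a,b}}"
    and cl: "\<forall>i\<in>K. \<forall>j\<in>X. col j \<in> {a,b} \<and> adjc en i j \<longrightarrow> j \<in> K"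
  shows "proper en X (kswap col K a b)"
  unfolding proper_def
proof (intro ballI impI)
  fix i j assume i: "i \<in> X" and j: "j \<in> X" and ij: "adjc en i j"
  have ne: "col i \<noteq> col j" using pr i j ij unfolding proper_def by blast
  show "kswap col K a b i \<noteq> kswap col K a b j"
  proof (cases "i \<in> K")
    case iK: True
    have ci: "col i \<in> {a,b}" using KS iK by blast
    show ?thesis
    proof (cases "j \<in> K")
      case True
      then show ?thesis using iK ne swapc_inj unfolding kswap_def by metis
    next
      case False
      then have "col j \<notin> {a,b}" using cl iK j ij by blast
      moreover have "kswap col K a b i \<in> {a,b}" using iK ci swapc_in unfolding kswap_def by simp
      moreover have "kswap col K a b j = col j" using False unfolding kswap_def by simp
      ultimately show ?thesis by metis
    qed
  next
    case iK: False
    show ?thesis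
    proof (cases "j \<in> K")
      case True
      have cj: "col j \<in> {a,b}" using KS True by blast
      have "adjc en j i" using ij adjc_sym by metis
      then have "col i \<notin> {a,b}" using cl i True iK by blast
      moreover have "kswap col K a b j \<in> {a,b}" using True cj swapc_in unfolding kswap_def by simp
      moreover have "kswap col K a b i = col i" using iK unfolding kswap_def by simp
      ultimately show ?thesis by metis
    next
      case False then show ?thesis using iK ne unfolding kswap_def by simp
    qed
  qed
qed

lemma swap_bound:
  assumes "\<forall>i\<in>X. col i < q" "a < q" "b < q"
  shows "\<forall>i\<in>X. kswap col K a b i < q"
  using assms unfolding kswap_def swapc_def by auto




lemma card_filter_sum: "finite A \<Longrightarrow> card {x\<in>A. P x} = (\<Sum>x\<in>A. if P x then 1 else 0)"
  using sum.inter_filter[of A "\<lambda>_. 1::nat" P] by simp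

lemma double_count:
  assumes "finite S" "finite W" "\<forall>i\<in>S. en i \<subseteq> W"
  shows "(\<Sum>i\<in>S. card (en i)) = (\<Sum>v\<in>W. card {i\<in>S. v \<in> en i})"
proof -
  have "(\<Sum>i\<in>S. card (en i)) = (\<Sum>i\<in>S. \<Sum>v\<in>W. if v \<in> en i then 1 else 0)"
  proof (rule sum.cong)
    fix i assume "i \<in> S"
    then have "en i = {v\<in>W. v \<in> en i}" using assms(3) by auto
    then have "card (en i) = card {v\<in>W. v \<in> en i}" by simp
    also have "\<dots> = (\<Sum>v\<in>W. if v \<in> en i then 1 else 0)" by (rule card_filter_sum[OF assms(2)])
    finally show "card (en i) = (\<Sum>v\<in>W. if v \<in> en i then 1 else 0)" .
  qed simp
  also have "\<dots> = (\<Sum>v\<in>W. \<Sum>i\<in>S. if v \<in> en i then 1 else 0)" by (rule sum.swap)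
  also have "\<dots> = (\<Sum>v\<in>W. card {i\<in>S. v \<in> en i})"
    by (rule sum.cong[OF refl], rule card_filter_sum[OF assms(1), symmetric])
  finally show ?thesis .
qed

lemma delta_le1:
  assumes fin: "finite X" and two: "\<forall>i\<in>X. card (en i) = 2" and pr: "proper en X col"
    and ab: "a \<noteq> b" and i0: "i0 \<in> X" "col i0 \<in> {a,b}"
  shows "card {i\<in>kcomp en X col a b i0. col i = a} \<le> card {i\<in>kcomp en X col a b i0. col i = b} + 1"
proof -
  define C where "C = kcomp en X col a b i0"
  have CS: "C \<subseteq> {i\<in>X. col i \<in> {a,b}}" unfolding C_def by (rule comp_sub(1)[of i0 X col a b en, OF i0])
  have finC: "finite C" using finite_subset[OF CS] fin by simp
  have twoC: "\<forall>i\<in>C. card (en i) = 2" using CS two by blast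
  define dA where "dA v = card {i\<in>C. col i = a \<and> v \<in> en i}" for v
  define dB where "dB v = card {i\<in>C. col i = b \<and> v \<in> en i}" for v
  have dA1: "dA v \<le> 1" for v
  proof -
    have "dA v \<le> card {i\<in>X. col i = a \<and> v \<in> en i}" unfolding dA_def
      using CS fin by (intro card_mono) auto
    then show ?thesis using proper_class_le1[OF pr fin] le_trans by blast
  qed
  have dB1: "dB v \<le> 1" for v
  proof -
    have "dB v \<le> card {i\<in>X. col i = b \<and> v \<in> en i}" unfolding dB_def
      using CS fin by (intro card_mono) auto
    then show ?thesis using proper_class_le1[OF pr fin] le_trans by blast
  qed
  have dgsum: "dg en C v = dA v + dB v" for v
  proof -
    have "{i\<in>C. v \<in> en i} = {i\<in>C. col i = a \<and> v \<in> en i} \<union> {i\<in>C. col i = b \<and> v \<in> en i}"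
      using CS by auto
    moreover have "{i\<in>C. col i = a \<and> v \<in> en i} \<inter> {i\<in>C. col i = b \<and> v \<in> en i} = {}"
      using ab by auto
    ultimately show ?thesis unfolding dg_def dA_def dB_def using finC
      by (simp add: card_Un_disjoint)
  qed
  have dg2: "\<forall>v. dg en C v \<le> 2" using dgsum dA1 dB1 by (metis add_le_mono one_add_one)
  have cn: "conn en C" unfolding C_def by (rule comp_conn[of i0 X col a b en, OF i0])
  have L2: "card (leaves en C) \<le> 2" using leaves_le2[OF finC twoC dg2 cn] .
  have finL: "finite (leaves en C)" using leaves_finite[OF finC twoC] .
  define W where "W = \<Union>(en ` C)"
  have finW: "finite W" unfolding W_def using finC twoC
    by (intro finite_UN_I) (auto intro: card_ge_0_finite)
  have sub: "\<forall>i\<in>S. en i \<subseteq> W" if "S \<subseteq> C" for S using that unfolding W_def by auto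
  have eqA: "2 * card {i\<in>C. col i = a} = (\<Sum>v\<in>W. dA v)"
  proof -
    have "2 * card {i\<in>C. col i = a} = (\<Sum>i\<in>{i\<in>C. col i = a}. card (en i))"
      using twoC by simp
    also have "\<dots> = (\<Sum>v\<in>W. card {i\<in>{i\<in>C. col i = a}. v \<in> en i})"
      using finC finW sub[of "{i\<in>C. col i = a}"] by (intro double_count) auto
    also have "\<dots> = (\<Sum>v\<in>W. dA v)" unfolding dA_def by (intro sum.cong) auto
    finally show ?thesis .
  qed
  have eqB: "2 * card {i\<in>C. col i = b} = (\<Sum>v\<in>W. dB v)"
  proof -
    have "2 * card {i\<in>C. col i = b} = (\<Sum>i\<in>{i\<in>C. col i = b}. card (en i))"
      using twoC by simp
    also have "\<dots> = (\<Sum>v\<in>W. card {i\<in>{i\<in>C. col i = b}. v \<in> en i})"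
      using finC finW sub[of "{i\<in>C. col i = b}"] by (intro double_count) auto
    also have "\<dots> = (\<Sum>v\<in>W. dB v)" unfolding dB_def by (intro sum.cong) auto
    finally show ?thesis .
  qed
  have pt: "dA v \<le> dB v + (if v \<in> leaves en C then 1 else 0)" for v
  proof (cases "dA v = 0")
    case True then show ?thesis by simp
  next
    case False
    then have a1: "dA v = 1" using dA1[of v] by simp
    show ?thesis
    proof (cases "dB v = 0")
      case True
      then have "dg en C v = 1" using dgsum a1 by simp
      then have "v \<in> leaves en C" unfolding leaves_def by simp
      then show ?thesis using a1 by simp
    next
      case False then show ?thesis using a1 by simp
    qed
  qed
  have "(\<Sum>v\<in>W. dA v) \<le> (\<Sum>v\<in>W. dB v + (if v \<in> leaves en C then 1 else 0))"
    by (intro sum_mono pt)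
  also have "\<dots> = (\<Sum>v\<in>W. dB v) + card {v\<in>W. v \<in> leaves en C}"
    by (simp add: sum.distrib card_filter_sum[OF finW])
  also have "card {v\<in>W. v \<in> leaves en C} \<le> card (leaves en C)"
    using finL by (intro card_mono) auto
  finally have "2 * card {i\<in>C. col i = a} \<le> 2 * card {i\<in>C. col i = b} + 2"
    using eqA eqB L2 by linarith
  then show ?thesis unfolding C_def by linarith
qed

lemma sum_partition_card:
  assumes "finite P" "finite A" "\<forall>i\<in>A. card {K\<in>P. i \<in> K} = 1"
  shows "(\<Sum>K\<in>P. card (K \<inter> A)) = card A"
proof -
  have "(\<Sum>K\<in>P. card (K \<inter> A)) = (\<Sum>K\<in>P. \<Sum>i\<in>A. if i \<in> K then 1 else 0)"
  proof (rule sum.cong)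
    fix K assume "K \<in> P"
    have "K \<inter> A = {i\<in>A. i \<in> K}" by auto
    then show "card (K \<inter> A) = (\<Sum>i\<in>A. if i \<in> K then 1 else 0)"
      using card_filter_sum[OF assms(2), of "\<lambda>i. i \<in> K"] by simp
  qed simp
  also have "\<dots> = (\<Sum>i\<in>A. \<Sum>K\<in>P. if i \<in> K then 1 else 0)" by (rule sum.swap)
  also have "\<dots> = (\<Sum>i\<in>A. card {K\<in>P. i \<in> K})"
    by (rule sum.cong[OF refl], rule card_filter_sum[OF assms(1), symmetric])
  also have "\<dots> = (\<Sum>i\<in>A. 1)" using assms(3) by (intro sum.cong) auto
  finally show ?thesis by simp
qed

lemma exists_comp:
  assumes fin: "finite X" and gt: "card {i\<in>X. col i = a} > card {i\<in>X. col i = b}"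
  shows "\<exists>i0\<in>X. col i0 \<in> {a,b} \<and>
    card {i\<in>kcomp en X col a b i0. col i = a} > card {i\<in>kcomp en X col a b i0. col i = b}"
proof (rule ccontr)
  assume na: "\<not> ?thesis"
  define S where "S = {i\<in>X. col i \<in> {a,b}}"
  define P where "P = kcomp en X col a b ` S"
  have finS: "finite S" unfolding S_def using fin by simp
  have finP: "finite P" unfolding P_def using finS by simp
  have KX: "K \<subseteq> X" if KP: "K \<in> P" for K
  proof -
    obtain j where "j \<in> S" "K = kcomp en X col a b j" using KP unfolding P_def by blast
    then show ?thesis using comp_sub(1)[of j X col a b en] unfolding S_def by blast
  qed
  have one: "\<forall>i\<in>S. card {K\<in>P. i \<in> K} = 1"
  proof
    fix i assume iS: "i \<in> S"
    have "{K\<in>P. i \<in> K} = {kcomp en X col a b i}"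
    proof (intro set_eqI iffI)
      fix K assume "K \<in> {K\<in>P. i \<in> K}"
      then obtain j where j: "j \<in> S" "K = kcomp en X col a b j" "i \<in> K" unfolding P_def by auto
      then have "kcomp en X col a b i = K" using comp_eq by metis
      then show "K \<in> {kcomp en X col a b i}" by simp
    next
      fix K assume "K \<in> {kcomp en X col a b i}"
      then have K: "K = kcomp en X col a b i" by simp
      have "i \<in> K" unfolding K using iS comp_sub(2)[of i X col a b en] unfolding S_def by blast
      moreover have "K \<in> P" unfolding K P_def using iS by simp
      ultimately show "K \<in> {K\<in>P. i \<in> K}" by simp
    qed
    then show "card {K\<in>P. i \<in> K} = 1" by simp
  qed
  define Aa where "Aa = {i\<in>X. col i = a}"
  define Ab where "Ab = {i\<in>X. col i = b}"
  have cA: "card Aa = (\<Sum>K\<in>P. card (K \<inter> Aa))"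
    using sum_partition_card[OF finP, of Aa] one fin unfolding Aa_def S_def by simp
  have cB: "card Ab = (\<Sum>K\<in>P. card (K \<inter> Ab))"
    using sum_partition_card[OF finP, of Ab] one fin unfolding Ab_def S_def by simp
  have "(\<Sum>K\<in>P. card (K \<inter> Aa)) \<le> (\<Sum>K\<in>P. card (K \<inter> Ab))"
  proof (rule sum_mono)
    fix K assume K: "K \<in> P"
    then obtain j where j: "j \<in> S" "K = kcomp en X col a b j" unfolding P_def by auto
    have "K \<inter> Aa = {i\<in>K. col i = a}" "K \<inter> Ab = {i\<in>K. col i = b}"
      using KX[OF K] unfolding Aa_def Ab_def by auto
    moreover have "\<not> card {i\<in>K. col i = a} > card {i\<in>K. col i = b}"
      using na j unfolding S_def by auto
    ultimately show "card (K \<inter> Aa) \<le> card (K \<inter> Ab)" by simp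
  qed
  then show False using cA cB gt unfolding Aa_def Ab_def by simp
qed




lemma sum_classes:
  fixes col :: "'i \<Rightarrow> nat"
  assumes fin: "finite X" and bd: "\<forall>i\<in>X. col i < q"
  shows "(\<Sum>c<q. card {i\<in>X. col i = c}) = card X"
proof -
  have "X = (\<Union>c\<in>{..<q}. {i\<in>X. col i = c})" using bd by auto
  then have "card X = card (\<Union>c\<in>{..<q}. {i\<in>X. col i = c})" by simp
  also have "\<dots> = (\<Sum>c<q. card {i\<in>X. col i = c})"
    using fin by (intro card_UN_disjoint) auto
  finally show ?thesis by simp
qed

lemma balance:
  fixes col :: "'i \<Rightarrow> nat"
  assumes fin: "finite X" and two: "\<forall>i\<in>X. card (en i) = 2"
  shows "proper en X col \<Longrightarrow> (\<forall>i\<in>X. col i < q) \<Longrightarrow> card X \<le> q * m \<Longrightarrow>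
    \<exists>col'. proper en X col' \<and> (\<forall>i\<in>X. col' i < q) \<and> (\<forall>c<q. card {i\<in>X. col' i = c} \<le> m)"
proof (induction "\<Sum>c<q. card {i\<in>X. col i = c} - m" arbitrary: col rule: less_induct)
  case less
  note pr = less.prems(1) and bd = less.prems(2) and tot = less.prems(3)
  let ?cl = "\<lambda>col c. card {i\<in>X. col i = c}"
  show ?case
  proof (cases "\<forall>c<q. ?cl col c \<le> m")
    case True then show ?thesis using pr bd by blast
  next
    case False
    then obtain a where a: "a < q" "?cl col a > m" by (auto simp: not_le)
    have sumq: "(\<Sum>c<q. ?cl col c) = card X" using sum_classes[OF fin bd] .
    obtain b where b: "b < q" "?cl col b < m"
    proof (rule ccontr)
      assume nt: "\<not> thesis"
      have ge: "\<forall>c\<in>{..<q}. m \<le> ?cl col c"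
      proof
        fix c assume "c \<in> {..<q}"
        then have cq: "c < q" by simp
        show "m \<le> ?cl col c"
        proof (rule ccontr)
          assume "\<not> m \<le> ?cl col c"
          then have "?cl col c < m" by simp
          from that[OF cq this] nt show False by simp
        qed
      qed
      have "(\<Sum>c\<in>{..<q}. m) < (\<Sum>c\<in>{..<q}. ?cl col c)"
        using a ge by (intro sum_strict_mono_ex1) auto
      then show False using sumq tot by (simp add: mult.commute)
    qed
    have ab: "a \<noteq> b" using a b by auto
    have gt: "?cl col a > ?cl col b" using a b by simp
    obtain i0 where i0: "i0 \<in> X" "col i0 \<in> {a,b}"
      and cgt: "card {i\<in>kcomp en X col a b i0. col i = a} > card {i\<in>kcomp en X col a b i0. col i = b}"
      using exists_comp[OF fin gt, of en] by blast
    define K where "K = kcomp en X col a b i0"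
    have KS: "K \<subseteq> {i\<in>X. col i \<in> {a,b}}" unfolding K_def
      by (rule comp_sub(1)[of i0 X col a b en, OF i0])
    have cl: "\<forall>i\<in>K. \<forall>j\<in>X. col j \<in> {a,b} \<and> adjc en i j \<longrightarrow> j \<in> K"
      unfolding K_def using comp_closed[of i0 X col a b _ en] i0 by blast
    have dl: "card {i\<in>K. col i = a} \<le> card {i\<in>K. col i = b} + 1"
      unfolding K_def by (rule delta_le1[OF fin two pr ab i0])
    have d1: "card {i\<in>K. col i = a} = card {i\<in>K. col i = b} + 1" using dl cgt unfolding K_def by simp
    define col' where "col' = kswap col K a b"
    have pr': "proper en X col'" unfolding col'_def by (rule swap_proper[OF pr KS cl])
    have bd': "\<forall>i\<in>X. col' i < q" unfolding col'_def using swap_bound[OF bd a(1) b(1)] .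
    have finK: "finite K" using finite_subset[OF KS] fin by simp
    have sa: "{i\<in>X. col' i = a} = ({i\<in>X. col i = a} - K) \<union> {i\<in>K. col i = b}"
      using KS ab unfolding col'_def kswap_def swapc_def by auto
    have sb: "{i\<in>X. col' i = b} = ({i\<in>X. col i = b} - K) \<union> {i\<in>K. col i = a}"
      using KS ab unfolding col'_def kswap_def swapc_def by auto
    have sc: "{i\<in>X. col' i = c} = {i\<in>X. col i = c}" if "c \<noteq> a" "c \<noteq> b" for c
      using KS that unfolding col'_def kswap_def swapc_def by auto
    have ca: "?cl col' a = ?cl col a - card {i\<in>K. col i = a} + card {i\<in>K. col i = b}"
    proof -
      have "?cl col' a = card ({i\<in>X. col i = a} - K) + card {i\<in>K. col i = b}"
        unfolding sa using fin finK by (intro card_Un_disjoint) auto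
      moreover have "card ({i\<in>X. col i = a} - K) = ?cl col a - card {i\<in>K. col i = a}"
      proof -
        have "{i\<in>X. col i = a} \<inter> K = {i\<in>K. col i = a}" using KS by auto
        then show ?thesis using card_Diff_subset_Int[of "{i\<in>X. col i = a}" K] finK
          by (metis (no_types, lifting) Diff_Int2 card_Diff_subset finite_Int inf.cobounded2 Int_commute)
      qed
      ultimately show ?thesis by simp
    qed
    have cb: "?cl col' b = ?cl col b - card {i\<in>K. col i = b} + card {i\<in>K. col i = a}"
    proof -
      have "?cl col' b = card ({i\<in>X. col i = b} - K) + card {i\<in>K. col i = a}"
        unfolding sb using fin finK by (intro card_Un_disjoint) auto
      moreover have "card ({i\<in>X. col i = b} - K) = ?cl col b - card {i\<in>K. col i = b}"
      proof -
        have "{i\<in>X. col i = b} \<inter> K = {i\<in>K. col i = b}" using KS by auto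
        then show ?thesis using card_Diff_subset_Int[of "{i\<in>X. col i = b}" K] finK
          by (metis (no_types, lifting) Diff_Int2 card_Diff_subset finite_Int inf.cobounded2 Int_commute)
      qed
      ultimately show ?thesis by simp
    qed
    have leA: "card {i\<in>K. col i = a} \<le> ?cl col a"
      using fin KS by (intro card_mono) auto
    have leB: "card {i\<in>K. col i = b} \<le> ?cl col b"
      using fin KS by (intro card_mono) auto
    have ca': "?cl col' a = ?cl col a - 1" using ca d1 leA by simp
    have cb': "?cl col' b = ?cl col b + 1" using cb d1 leB by simp
    have lt: "(\<Sum>c<q. ?cl col' c - m) < (\<Sum>c<q. ?cl col c - m)"
    proof (rule sum_strict_mono_ex1)
      show "finite {..<q}" by simp
      show "\<forall>c\<in>{..<q}. ?cl col' c - m \<le> ?cl col c - m"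
      proof
        fix c assume "c \<in> {..<q}"
        show "?cl col' c - m \<le> ?cl col c - m"
        proof (cases "c = a")
          case True then show ?thesis using ca' by simp
        next
          case ca2: False
          show ?thesis
          proof (cases "c = b")
            case True then show ?thesis using cb' b by simp
          next
            case False then show ?thesis using sc ca2 by simp
          qed
        qed
      qed
      show "\<exists>c\<in>{..<q}. ?cl col' c - m < ?cl col c - m"
        using a ca' by (intro bexI[of _ a]) auto
    qed
    have tot': "card X \<le> q * m" using tot .
    show ?thesis using less.hyps[OF lt pr' bd' tot'] .
  qed
qed




definition miss :: "('a set \<Rightarrow> nat) \<Rightarrow> 'a set set \<Rightarrow> 'a \<Rightarrow> nat set" where
  "miss col E x = {c. c < 4 \<and> (\<forall>f\<in>E. x \<in> f \<longrightarrow> col f \<noteq> c)}"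

lemma miss_fin: "finite (miss col E x)"
  unfolding miss_def by (rule finite_subset[of _ "{..<4}"]) auto

lemma miss_card:
  assumes "finite E" "card {f\<in>E. x \<in> f} \<le> 2"
  shows "2 \<le> card (miss col E x)"
proof -
  have eq: "miss col E x = {..<4} - col ` {f\<in>E. x \<in> f}" unfolding miss_def by auto
  have "card (col ` {f\<in>E. x \<in> f}) \<le> 2" using card_image_le[of "{f\<in>E. x \<in> f}" col] assms by simp
  moreover have "card {..<(4::nat)} - card (col ` {f\<in>E. x \<in> f}) \<le> card ({..<4} - col ` {f\<in>E. x \<in> f})"
    using assms(1) by (intro diff_card_le_card_Diff) simp
  ultimately show ?thesis unfolding eq by simp
qed

lemma ext_col:
  assumes pr: "proper id E' col" and bd: "\<forall>f\<in>E'. col f < 4" and wE: "\<forall>f\<in>E'. w \<notin> f"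
    and wEw: "\<forall>e\<in>Ew. w \<in> e" and inj: "inj_on c Ew"
    and cm: "\<forall>e\<in>Ew. \<forall>x\<in>e. x \<noteq> w \<longrightarrow> c e \<in> miss col E' x"
    and oth: "\<forall>e\<in>Ew. \<exists>x\<in>e. x \<noteq> w"
  shows "proper id (E' \<union> Ew) (\<lambda>e. if e \<in> Ew then c e else col e) \<and>
         (\<forall>e\<in>E' \<union> Ew. (if e \<in> Ew then c e else col e) < 4)"
proof
  show "\<forall>e\<in>E' \<union> Ew. (if e \<in> Ew then c e else col e) < 4"
  proof
    fix e assume e: "e \<in> E' \<union> Ew"
    show "(if e \<in> Ew then c e else col e) < 4"
    proof (cases "e \<in> Ew")
      case True
      then obtain x where "x \<in> e" "x \<noteq> w" using oth by blast
      then have "c e \<in> miss col E' x" using cm True by blast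
      then show ?thesis using True unfolding miss_def by simp
    next
      case False then show ?thesis using e bd by simp
    qed
  qed
  show "proper id (E' \<union> Ew) (\<lambda>e. if e \<in> Ew then c e else col e)"
    unfolding proper_def
  proof (intro ballI impI)
    fix e f assume e: "e \<in> E' \<union> Ew" and f: "f \<in> E' \<union> Ew" and ef: "adjc id e f"
    have ne: "e \<noteq> f" and "e \<inter> f \<noteq> {}" using ef unfolding adjc_def by auto
    then obtain x where x: "x \<in> e" "x \<in> f" by blast
    show "(if e \<in> Ew then c e else col e) \<noteq> (if f \<in> Ew then c f else col f)"
    proof (cases "e \<in> Ew")
      case eT: True
      show ?thesis
      proof (cases "f \<in> Ew")
        case True then show ?thesis using eT inj ne unfolding inj_on_def by auto
      next
        case False
        then have fE: "f \<in> E'" using f by simp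
        then have "x \<noteq> w" using wE x by blast
        then have "c e \<in> miss col E' x" using cm eT x by blast
        then have "col f \<noteq> c e" using fE x unfolding miss_def by blast
        then show ?thesis using eT False by simp
      qed
    next
      case eF: False
      then have eE: "e \<in> E'" using e by simp
      show ?thesis
      proof (cases "f \<in> Ew")
        case True
        have "x \<noteq> w" using wE x eE by blast
        then have "c f \<in> miss col E' x" using cm True x by blast
        then have "col e \<noteq> c f" using eE x unfolding miss_def by blast
        then show ?thesis using eF True by simp
      next
        case False
        then have "f \<in> E'" using f by simp
        then show ?thesis using eF False eE pr ef unfolding proper_def by simp
      qed
    qed
  qed
qed

lemma card_union3:
  fixes S1 S2 :: "nat set"
  assumes "finite S1" "finite S2" "2 \<le> card S1" "2 \<le> card S2" "S1 \<noteq> S2"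
  shows "3 \<le> card (S1 \<union> S2)"
proof -
  obtain y where y: "(y \<in> S2 \<and> y \<notin> S1) \<or> (y \<in> S1 \<and> y \<notin> S2)" using assms(5) by blast
  then show ?thesis
  proof
    assume "y \<in> S2 \<and> y \<notin> S1"
    then have "card (insert y S1) \<le> card (S1 \<union> S2)" using assms by (intro card_mono) auto
    then show ?thesis using \<open>y \<in> S2 \<and> y \<notin> S1\<close> assms by simp
  next
    assume "y \<in> S1 \<and> y \<notin> S2"
    then have "card (insert y S2) \<le> card (S1 \<union> S2)" using assms by (intro card_mono) auto
    then show ?thesis using \<open>y \<in> S1 \<and> y \<notin> S2\<close> assms by simp
  qed
qed

lemma sdr_pair:
  fixes S1 S2 S3 :: "nat set"
  assumes f: "finite S1" "finite S2" "finite S3" and c: "2 \<le> card S1" "2 \<le> card S2" "2 \<le> card S3"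
    and ne: "S1 \<noteq> S2"
  shows "\<exists>c1\<in>S1. \<exists>c2\<in>S2. \<exists>c3\<in>S3. c1 \<noteq> c2 \<and> c1 \<noteq> c3 \<and> c2 \<noteq> c3"
proof -
  have u3: "3 \<le> card (S1 \<union> S2)" using card_union3 f c ne by blast
  have "S3 \<noteq> {}" using c(3) by auto
  then obtain c3 where c3: "c3 \<in> S3" by blast
  define T1 where "T1 = S1 - {c3}"
  define T2 where "T2 = S2 - {c3}"
  have T1ne: "T1 \<noteq> {}"
  proof
    assume "T1 = {}"
    then have "S1 \<subseteq> {c3}" unfolding T1_def by auto
    then have "card S1 \<le> 1" using card_mono[of "{c3}" S1] by simp
    then show False using c by simp
  qed
  have T2ne: "T2 \<noteq> {}"
  proof
    assume "T2 = {}"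
    then have "S2 \<subseteq> {c3}" unfolding T2_def by auto
    then have "card S2 \<le> 1" using card_mono[of "{c3}" S2] by simp
    then show False using c by simp
  qed
  have Teq: "T1 \<union> T2 = (S1 \<union> S2) - {c3}" unfolding T1_def T2_def by auto
  have Tc: "card (T1 \<union> T2) = card ((S1 \<union> S2) - {c3})" unfolding Teq ..
  have "card ((S1 \<union> S2) - {c3}) \<ge> card (S1 \<union> S2) - 1"
    by (simp add: card_Diff_singleton_if)
  then have u2: "2 \<le> card (T1 \<union> T2)" using u3 Tc by linarith
  obtain c1 where c1: "c1 \<in> T1" using T1ne by blast
  show ?thesis
  proof (cases "T2 \<subseteq> {c1}")
    case True
    then have T2e: "T2 = {c1}" using T2ne by blast
    have "T1 \<union> T2 = T1" using T2e c1 by auto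
    then have "2 \<le> card T1" using u2 by simp
    have "\<exists>c1'. c1' \<in> T1 \<and> c1' \<noteq> c1"
    proof (rule ccontr)
      assume "\<not> (\<exists>c1'. c1' \<in> T1 \<and> c1' \<noteq> c1)"
      then have "T1 \<subseteq> {c1}" by blast
      then have "card T1 \<le> 1" using card_mono[of "{c1}" T1] by simp
      then show False using \<open>2 \<le> card T1\<close> by simp
    qed
    then obtain c1' where "c1' \<in> T1" "c1' \<noteq> c1" by blast
    then have h: "c1' \<in> S1" "c1 \<in> S2" "c1' \<noteq> c1" "c1' \<noteq> c3" "c1 \<noteq> c3"
      using T2e c1 unfolding T1_def T2_def by auto
    show ?thesis
      apply (rule bexI[OF _ h(1)], rule bexI[OF _ h(2)], rule bexI[OF _ c3])
      using h(3-5) by simp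
  next
    case False
    then obtain c2 where "c2 \<in> T2" "c2 \<noteq> c1" by blast
    then have h: "c1 \<in> S1" "c2 \<in> S2" "c1 \<noteq> c2" "c1 \<noteq> c3" "c2 \<noteq> c3"
      using c1 unfolding T1_def T2_def by auto
    show ?thesis
      apply (rule bexI[OF _ h(1)], rule bexI[OF _ h(2)], rule bexI[OF _ c3])
      using h(3-5) by simp
  qed
qed

lemma sdr3:
  fixes S1 S2 S3 :: "nat set"
  assumes f: "finite S1" "finite S2" "finite S3" and c: "2 \<le> card S1" "2 \<le> card S2" "2 \<le> card S3"
    and ne: "\<not> (S1 = S2 \<and> S1 = S3)"
  shows "\<exists>c1\<in>S1. \<exists>c2\<in>S2. \<exists>c3\<in>S3. c1 \<noteq> c2 \<and> c1 \<noteq> c3 \<and> c2 \<noteq> c3"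
proof (cases "S1 = S2")
  case False show ?thesis using sdr_pair[OF f c False] .
next
  case True
  then have n23: "S2 \<noteq> S3" using ne by simp
  obtain c2 c3 c1 where h: "c2 \<in> S2" "c3 \<in> S3" "c1 \<in> S1" "c2 \<noteq> c3" "c2 \<noteq> c1" "c3 \<noteq> c1"
    using sdr_pair[OF f(2,3,1) c(2,3,1) n23] by blast
  show ?thesis
    apply (rule bexI[OF _ h(3)], rule bexI[OF _ h(1)], rule bexI[OF _ h(2)])
    using h(4-6) by simp
qed

lemma three_elems:
  fixes S :: "nat set"
  assumes "finite S" "3 \<le> card S"
  shows "\<exists>c1\<in>S. \<exists>c2\<in>S. \<exists>c3\<in>S. c1 \<noteq> c2 \<and> c1 \<noteq> c3 \<and> c2 \<noteq> c3"
proof -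
  obtain T where T: "T \<subseteq> S" "card T = 3" using obtain_subset_with_card_n[OF assms(2)] by blast
  then obtain x y z where xyz: "T = {x,y,z}" "x \<noteq> y" "y \<noteq> z" "x \<noteq> z" unfolding card_3_iff by blast
  have m: "x \<in> S" "y \<in> S" "z \<in> S" using T(1) xyz(1) by auto
  show ?thesis
    apply (rule bexI[OF _ m(1)], rule bexI[OF _ m(2)], rule bexI[OF _ m(3)])
    using xyz(2-4) by simp
qed




lemma comp_leaves:
  assumes fin: "finite X" and two: "\<forall>i\<in>X. card (en i) = 2" and pr: "proper en X col"
    and ab: "a \<noteq> b" and i0: "i0 \<in> X" "col i0 \<in> {a,b}"
  shows "card (leaves en (kcomp en X col a b i0)) \<le> 2 \<and> finite (leaves en (kcomp en X col a b i0))"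
proof -
  define C where "C = kcomp en X col a b i0"
  have CS: "C \<subseteq> {i\<in>X. col i \<in> {a,b}}" unfolding C_def by (rule comp_sub(1)[of i0 X col a b en, OF i0])
  have finC: "finite C" using finite_subset[OF CS] fin by simp
  have twoC: "\<forall>i\<in>C. card (en i) = 2" using CS two by blast
  have dg2: "dg en C v \<le> 2" for v
  proof -
    have "{i\<in>C. v \<in> en i} \<subseteq> {i\<in>X. col i = a \<and> v \<in> en i} \<union> {i\<in>X. col i = b \<and> v \<in> en i}"
      using CS by auto
    then have "dg en C v \<le> card ({i\<in>X. col i = a \<and> v \<in> en i} \<union> {i\<in>X. col i = b \<and> v \<in> en i})"
      unfolding dg_def using fin by (intro card_mono) auto
    also have "\<dots> \<le> card {i\<in>X. col i = a \<and> v \<in> en i} + card {i\<in>X. col i = b \<and> v \<in> en i}"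
      by (rule card_Un_le)
    also have "\<dots> \<le> 1 + 1" using proper_class_le1[OF pr fin] by (intro add_mono) auto
    finally show ?thesis by simp
  qed
  have cn: "conn en C" unfolding C_def by (rule comp_conn[of i0 X col a b en, OF i0])
  have "card (leaves en C) \<le> 2" using leaves_le2[OF finC twoC _ cn] dg2 by blast
  moreover have "finite (leaves en C)" using leaves_finite[OF finC twoC] .
  ultimately show ?thesis unfolding C_def by simp
qed

lemma kempe3:
  fixes col :: "'a set \<Rightarrow> nat"
  assumes fin: "finite E'" and two: "\<forall>f\<in>E'. card f = 2" and pr: "proper id E' col"
    and bd: "\<forall>f\<in>E'. col f < 4"
    and d12: "x1 \<noteq> x2" and d13: "x1 \<noteq> x3" and d23: "x2 \<noteq> x3"
    and eq2: "miss col E' x2 = miss col E' x1" and eq3: "miss col E' x3 = miss col E' x1"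
    and c2: "card (miss col E' x1) = 2"
  shows "\<exists>col2. proper id E' col2 \<and> (\<forall>f\<in>E'. col2 f < 4) \<and>
     \<not> (miss col2 E' x1 = miss col2 E' x2 \<and> miss col2 E' x1 = miss col2 E' x3)"
proof -
  obtain a b where ab: "miss col E' x1 = {a,b}" "a \<noteq> b" using c2 unfolding card_2_iff by blast
  have a4: "a < 4" using ab unfolding miss_def by auto
  have b4: "b < 4" using ab unfolding miss_def by auto
  have "card ({..<(4::nat)} - {a,b}) = 2" using a4 b4 ab(2) by simp
  then have "{..<(4::nat)} - {a,b} \<noteq> {}" by (metis card.empty zero_neq_numeral)
  then obtain c0 where "c0 \<in> {..<(4::nat)} - {a,b}" by blast
  then have c0: "c0 < 4" "c0 \<noteq> a" "c0 \<noteq> b" by auto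
  define c where "c = c0"
  have c: "c < 4" "c \<noteq> a" "c \<noteq> b" using c0 unfolding c_def by auto
  have amiss: "a \<in> miss col E' x" if "x \<in> {x1,x2,x3}" for x
    using that ab eq2 eq3 by auto
  have cnot: "c \<notin> miss col E' x" if "x \<in> {x1,x2,x3}" for x
    using that ab eq2 eq3 c by auto
  have exf: "\<exists>f\<in>E'. x \<in> f \<and> col f = c" if "x \<in> {x1,x2,x3}" for x
    using cnot[OF that] c(1) unfolding miss_def by auto
  obtain f1 where f1: "f1 \<in> E'" "x1 \<in> f1" "col f1 = c" using exf[of x1] by auto
  obtain f2 where f2: "f2 \<in> E'" "x2 \<in> f2" "col f2 = c" using exf[of x2] by auto
  obtain f3 where f3: "f3 \<in> E'" "x3 \<in> f3" "col f3 = c" using exf[of x3] by auto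
  have noa: "col g \<noteq> a" if "g \<in> E'" "x \<in> g" "x \<in> {x1,x2,x3}" for g x
    using amiss[OF that(3)] that(1,2) unfolding miss_def by auto
  have uniq: "g = f" if "g \<in> E'" "f \<in> E'" "x \<in> g" "x \<in> f" "col g = col f" for g f x
  proof (rule ccontr)
    assume "g \<noteq> f"
    then have "adjc id g f" using that unfolding adjc_def by auto
    then show False using pr that unfolding proper_def by auto
  qed
  have ac: "a \<noteq> c" using c by simp
  define K where "K = kcomp id E' col a c f1"
  have i0: "f1 \<in> E'" "col f1 \<in> {a,c}" using f1 by auto
  have KS: "K \<subseteq> {i\<in>E'. col i \<in> {a,c}}" unfolding K_def
    by (rule comp_sub(1)[of f1 E' col a c id, OF i0])
  have f1K: "f1 \<in> K" unfolding K_def by (rule comp_sub(2)[of f1 E' col a c id, OF i0])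
  have cl: "\<forall>i\<in>K. \<forall>j\<in>E'. col j \<in> {a,c} \<and> adjc id i j \<longrightarrow> j \<in> K"
    unfolding K_def using comp_closed[of f1 E' col a c _ id] i0 by blast
  have two': "\<forall>i\<in>E'. card (id i) = 2" using two by simp
  have lv: "card (leaves id K) \<le> 2 \<and> finite (leaves id K)"
    unfolding K_def by (rule comp_leaves[OF fin two' pr ac i0])
  have leaf: "x \<in> leaves id K" if "x \<in> {x1,x2,x3}" "f \<in> K" "f \<in> E'" "x \<in> f" "col f = c" for x f
  proof -
    have "{g\<in>K. x \<in> id g} = {f}"
    proof (intro set_eqI iffI)
      fix g assume g: "g \<in> {g\<in>K. x \<in> id g}"
      then have gE: "g \<in> E'" "col g \<in> {a,c}" "x \<in> g" using KS by auto
      then have "col g = c" using noa[OF gE(1) gE(3) that(1)] by auto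
      then have "g = f" using uniq[OF gE(1) that(3) gE(3) that(4)] that(5) by simp
      then show "g \<in> {f}" by simp
    next
      fix g assume "g \<in> {f}"
      then show "g \<in> {g\<in>K. x \<in> id g}" using that by simp
    qed
    then show ?thesis unfolding leaves_def dg_def by simp
  qed
  have notboth: "\<not> (f2 \<in> K \<and> f3 \<in> K)"
  proof
    assume h: "f2 \<in> K \<and> f3 \<in> K"
    have "{x1,x2,x3} \<subseteq> leaves id K"
      using leaf[of x1 f1] leaf[of x2 f2] leaf[of x3 f3] f1 f2 f3 f1K h by auto
    then have "card {x1,x2,x3} \<le> card (leaves id K)" using lv by (intro card_mono) auto
    then show False using lv d12 d13 d23 by simp
  qed
  define col2 where "col2 = kswap col K a c"
  have pr2: "proper id E' col2" unfolding col2_def by (rule swap_proper[OF pr KS cl])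
  have bd2: "\<forall>f\<in>E'. col2 f < 4" unfolding col2_def using swap_bound[OF bd a4 c(1)] .
  have cin: "c \<in> miss col2 E' x1"
    unfolding miss_def
  proof (intro CollectI conjI ballI impI)
    show "c < 4" using c by simp
    fix f assume fE: "f \<in> E'" and xf: "x1 \<in> f"
    show "col2 f \<noteq> c"
    proof (cases "f \<in> K")
      case True
      then have "col f \<in> {a,c}" using KS by auto
      moreover have "col f \<noteq> a" using noa[OF fE xf] by simp
      ultimately have "col f = c" by simp
      then show ?thesis using True ac unfolding col2_def kswap_def swapc_def by simp
    next
      case False
      have "col f \<noteq> c"
      proof
        assume "col f = c"
        then have "f = f1" using uniq[OF fE f1(1) xf f1(2)] f1(3) by simp
        then show False using False f1K by simp
      qed
      then show ?thesis using False unfolding col2_def kswap_def by simp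
    qed
  qed
  have cout: "c \<notin> miss col2 E' x" if "f \<in> E'" "x \<in> f" "col f = c" "f \<notin> K" for f x
  proof -
    have "col2 f = c" using that unfolding col2_def kswap_def by simp
    then show ?thesis using that unfolding miss_def by auto
  qed
  have "\<not> (miss col2 E' x1 = miss col2 E' x2 \<and> miss col2 E' x1 = miss col2 E' x3)"
  proof (cases "f2 \<in> K")
    case True
    then have "f3 \<notin> K" using notboth by simp
    then have "c \<notin> miss col2 E' x3" using cout f3 by blast
    then show ?thesis using cin by auto
  next
    case False
    then have "c \<notin> miss col2 E' x2" using cout f2 by blast
    then show ?thesis using cin by auto
  qed
  then show ?thesis using pr2 bd2 by blast
qed




lemma two_elem: "card e = 2 \<Longrightarrow> w \<in> e \<Longrightarrow> \<exists>x. e = {w,x} \<and> x \<noteq> w"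
  unfolding card_2_iff by auto

lemma vizing3:
  "finite E \<Longrightarrow> (\<forall>e\<in>E. card e = 2) \<Longrightarrow> (\<forall>v. card {e\<in>E. v \<in> e} \<le> 3) \<Longrightarrow>
   \<exists>col. proper id E col \<and> (\<forall>e\<in>E. col e < 4)"
proof (induction "card E" arbitrary: E rule: less_induct)
  case less
  note fin = less.prems(1) and two = less.prems(2) and deg = less.prems(3)
  show ?case
  proof (cases "E = {}")
    case True
    have "proper id E (\<lambda>_. 0)" unfolding proper_def using True by simp
    then show ?thesis using True by blast
  next
    case False
    then obtain e0 where e0: "e0 \<in> E" by blast
    then have "card e0 = 2" using two by simp
    then have "e0 \<noteq> {}" by auto
    then obtain w where w: "w \<in> e0" by blast
    define Ew where "Ew = {e\<in>E. w \<in> e}"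
    define E' where "E' = {e\<in>E. w \<notin> e}"
    have EU: "E = E' \<union> Ew" unfolding E'_def Ew_def by auto
    have E'sub: "E' \<subseteq> E" unfolding E'_def by auto
    have lt: "card E' < card E"
      using fin e0 w unfolding E'_def by (intro psubset_card_mono) auto
    have finE': "finite E'" using fin E'sub finite_subset by blast
    have two': "\<forall>e\<in>E'. card e = 2" using two E'sub by blast
    have deg': "\<forall>v. card {e\<in>E'. v \<in> e} \<le> 3"
    proof
      fix v
      have "card {e\<in>E'. v \<in> e} \<le> card {e\<in>E. v \<in> e}" using fin E'sub by (intro card_mono) auto
      then show "card {e\<in>E'. v \<in> e} \<le> 3" using deg le_trans by blast
    qed
    obtain col where pr: "proper id E' col" and bd: "\<forall>f\<in>E'. col f < 4"
      using less.hyps[OF lt finE' two' deg'] by blast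
    have wE': "\<forall>f\<in>E'. w \<notin> f" unfolding E'_def by simp
    have wEw: "\<forall>e\<in>Ew. w \<in> e" unfolding Ew_def by simp
    have finEw: "finite Ew" unfolding Ew_def using fin by simp
    have cEw: "card Ew \<le> 3" unfolding Ew_def using deg by simp
    have e0Ew: "e0 \<in> Ew" unfolding Ew_def using e0 w by simp
    have degx: "card {f\<in>E'. x \<in> f} \<le> 2" if "{w,x} \<in> E" "x \<noteq> w" for x
    proof -
      have "{f\<in>E'. x \<in> f} \<subseteq> {f\<in>E. x \<in> f} - {{w,x}}" unfolding E'_def by auto
      then have "card {f\<in>E'. x \<in> f} \<le> card ({f\<in>E. x \<in> f} - {{w,x}})"
        using fin by (intro card_mono) auto
      also have "\<dots> = card {f\<in>E. x \<in> f} - 1" using that fin by (simp add: card_Diff_singleton)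
      finally show ?thesis using deg[rule_format, of x] by linarith
    qed
    have ewx: "\<exists>x. e = {w,x} \<and> x \<noteq> w" if "e \<in> Ew" for e
    proof -
      have "e \<in> E" "w \<in> e" using that unfolding Ew_def by auto
      then show ?thesis using two_elem[of e w] two by simp
    qed
    have oth: "\<forall>e\<in>Ew. \<exists>x\<in>e. x \<noteq> w"
    proof
      fix e assume "e \<in> Ew"
      then obtain x where "e = {w,x}" "x \<noteq> w" using ewx by blast
      then show "\<exists>x\<in>e. x \<noteq> w" by blast
    qed
    have fin_step: "\<exists>col. proper id E col \<and> (\<forall>e\<in>E. col e < 4)"
      if pr1: "proper id E' col1" and bd1: "\<forall>f\<in>E'. col1 f < 4" and inj: "inj_on c Ew"
        and cm: "\<forall>e\<in>Ew. \<forall>x\<in>e. x \<noteq> w \<longrightarrow> c e \<in> miss col1 E' x" for col1 c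
    proof -
      define F where "F = (\<lambda>e. if e \<in> Ew then c e else col1 e)"
      have "proper id (E' \<union> Ew) F \<and> (\<forall>e\<in>E' \<union> Ew. F e < 4)"
        unfolding F_def by (rule ext_col[OF pr1 bd1 wE' wEw inj cm oth])
      then show ?thesis unfolding EU by (intro exI[of _ F])
    qed
    have mc: "2 \<le> card (miss col1 E' x)" if "{w,x} \<in> E" "x \<noteq> w" for col1 x
      using miss_card[OF finE' degx[OF that]] .
    have "card Ew \<noteq> 0" using finEw e0Ew by auto
    then consider "card Ew = 1" | "card Ew = 2" | "card Ew = 3" using cEw by linarith
    then show ?thesis
    proof cases
      case 1
      then obtain e1 where Ew1: "Ew = {e1}" by (rule card_1_singletonE)
      then obtain x1 where x1: "e1 = {w,x1}" "x1 \<noteq> w" using ewx[of e1] Ew1 by blast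
      have inE: "{w,x1} \<in> E" using Ew1 x1 unfolding Ew_def by auto
      have "miss col E' x1 \<noteq> {}" using mc[OF inE x1(2), of col] by auto
      then obtain c1 where c1: "c1 \<in> miss col E' x1" by blast
      show ?thesis
      proof (rule fin_step[OF pr bd, of "\<lambda>_. c1"])
        show "inj_on (\<lambda>_. c1) Ew" using Ew1 by simp
        show "\<forall>e\<in>Ew. \<forall>x\<in>e. x \<noteq> w \<longrightarrow> c1 \<in> miss col E' x" using Ew1 x1 c1 by auto
      qed
    next
      case 2
      then obtain e1 e2 where Ew2: "Ew = {e1,e2}" "e1 \<noteq> e2" unfolding card_2_iff by blast
      obtain x1 where x1: "e1 = {w,x1}" "x1 \<noteq> w" using ewx[of e1] Ew2 by blast
      obtain x2 where x2: "e2 = {w,x2}" "x2 \<noteq> w" using ewx[of e2] Ew2 by blast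
      have inE1: "{w,x1} \<in> E" using Ew2 x1 unfolding Ew_def by auto
      have inE2: "{w,x2} \<in> E" using Ew2 x2 unfolding Ew_def by auto
      have "miss col E' x1 \<noteq> {}" using mc[OF inE1 x1(2), of col] by auto
      then obtain c1 where c1: "c1 \<in> miss col E' x1" by blast
      have "2 \<le> card (miss col E' x2)" using mc[OF inE2 x2(2)] .
      then have "miss col E' x2 - {c1} \<noteq> {}"
      proof -
        assume h: "2 \<le> card (miss col E' x2)"
        show ?thesis
        proof
          assume "miss col E' x2 - {c1} = {}"
          then have "miss col E' x2 \<subseteq> {c1}" by blast
          then have "card (miss col E' x2) \<le> 1" using card_mono[of "{c1}"] by fastforce
          then show False using h by simp
        qed
      qed
      then obtain c2 where c2: "c2 \<in> miss col E' x2" "c2 \<noteq> c1" by blast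
      define cf where "cf = (\<lambda>e. if e = e1 then c1 else c2)"
      show ?thesis
      proof (rule fin_step[OF pr bd, of cf])
        show "inj_on cf Ew" using Ew2 c2 unfolding cf_def inj_on_def by auto
        show "\<forall>e\<in>Ew. \<forall>x\<in>e. x \<noteq> w \<longrightarrow> cf e \<in> miss col E' x"
          using Ew2 x1 x2 c1 c2 unfolding cf_def by auto
      qed
    next
      case 3
      then obtain e1 e2 e3 where Ew3: "Ew = {e1,e2,e3}" "e1 \<noteq> e2" "e2 \<noteq> e3" "e1 \<noteq> e3"
        unfolding card_3_iff by blast
      obtain x1 where x1: "e1 = {w,x1}" "x1 \<noteq> w" using ewx[of e1] Ew3 by blast
      obtain x2 where x2: "e2 = {w,x2}" "x2 \<noteq> w" using ewx[of e2] Ew3 by blast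
      obtain x3 where x3: "e3 = {w,x3}" "x3 \<noteq> w" using ewx[of e3] Ew3 by blast
      have inE1: "{w,x1} \<in> E" using Ew3 x1 unfolding Ew_def by auto
      have inE2: "{w,x2} \<in> E" using Ew3 x2 unfolding Ew_def by auto
      have inE3: "{w,x3} \<in> E" using Ew3 x3 unfolding Ew_def by auto
      have d12: "x1 \<noteq> x2" using Ew3 x1 x2 by auto
      have d13: "x1 \<noteq> x3" using Ew3 x1 x3 by auto
      have d23: "x2 \<noteq> x3" using Ew3 x2 x3 by auto
      have good: "\<exists>col1 c1 c2 c3. proper id E' col1 \<and> (\<forall>f\<in>E'. col1 f < 4) \<and>
          c1 \<in> miss col1 E' x1 \<and> c2 \<in> miss col1 E' x2 \<and> c3 \<in> miss col1 E' x3 \<and>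
          c1 \<noteq> c2 \<and> c1 \<noteq> c3 \<and> c2 \<noteq> c3"
      proof (cases "miss col E' x1 = miss col E' x2 \<and> miss col E' x1 = miss col E' x3")
        case False
        obtain c1 c2 c3 where h: "c1 \<in> miss col E' x1" "c2 \<in> miss col E' x2" "c3 \<in> miss col E' x3"
          "c1 \<noteq> c2" "c1 \<noteq> c3" "c2 \<noteq> c3"
          using sdr3[OF miss_fin miss_fin miss_fin mc[OF inE1 x1(2)] mc[OF inE2 x2(2)] mc[OF inE3 x3(2)] False]
          by blast
        show ?thesis
          apply (rule exI[of _ col], rule exI[of _ c1], rule exI[of _ c2], rule exI[of _ c3])
          using pr bd h by simp
      next
        case True
        have eq2: "miss col E' x2 = miss col E' x1" using conjunct1[OF True, symmetric] .
        have eq3: "miss col E' x3 = miss col E' x1" using conjunct2[OF True, symmetric] .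
        show ?thesis
        proof (cases "card (miss col E' x1) = 2")
          case False
          then have "3 \<le> card (miss col E' x1)" using mc[OF inE1 x1(2), of col] by linarith
          from three_elems[OF miss_fin this] obtain c1 c2 c3 where
            h: "c1 \<in> miss col E' x1" "c2 \<in> miss col E' x1" "c3 \<in> miss col E' x1"
            "c1 \<noteq> c2" "c1 \<noteq> c3" "c2 \<noteq> c3" by blast
          show ?thesis
            apply (rule exI[of _ col], rule exI[of _ c1], rule exI[of _ c2], rule exI[of _ c3])
            using pr bd h eq2 eq3 by simp
        next
          case c2: True
          from kempe3[OF finE' two' pr bd d12 d13 d23 eq2 eq3 c2] obtain col2 where
            pr2: "proper id E' col2" and bd2: "\<forall>f\<in>E'. col2 f < 4"
            and ne: "\<not> (miss col2 E' x1 = miss col2 E' x2 \<and> miss col2 E' x1 = miss col2 E' x3)"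
            by blast
          obtain c1 c2 c3 where h: "c1 \<in> miss col2 E' x1" "c2 \<in> miss col2 E' x2" "c3 \<in> miss col2 E' x3"
            "c1 \<noteq> c2" "c1 \<noteq> c3" "c2 \<noteq> c3"
            using sdr3[OF miss_fin miss_fin miss_fin mc[OF inE1 x1(2)] mc[OF inE2 x2(2)] mc[OF inE3 x3(2)] ne]
            by blast
          show ?thesis
            apply (rule exI[of _ col2], rule exI[of _ c1], rule exI[of _ c2], rule exI[of _ c3])
            using pr2 bd2 h by simp
        qed
      qed
      then obtain col1 c1 c2 c3 where g: "proper id E' col1" "\<forall>f\<in>E'. col1 f < 4"
          "c1 \<in> miss col1 E' x1" "c2 \<in> miss col1 E' x2" "c3 \<in> miss col1 E' x3"
          "c1 \<noteq> c2" "c1 \<noteq> c3" "c2 \<noteq> c3" by (elim exE conjE) blast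
      define cf where "cf = (\<lambda>e. if e = e1 then c1 else if e = e2 then c2 else c3)"
      show ?thesis
      proof (rule fin_step[OF g(1) g(2), of cf])
        show "inj_on cf Ew" using Ew3 g(6-8) unfolding cf_def inj_on_def by auto
        show "\<forall>e\<in>Ew. \<forall>x\<in>e. x \<noteq> w \<longrightarrow> cf e \<in> miss col1 E' x"
          using Ew3 x1 x2 x3 g(3-5) unfolding cf_def by auto
      qed
    qed
  qed
qed




lemma arith_facts:
  fixes n m :: nat
  assumes m0: "0 < m" and hm: "int m < \<lceil>(3 * real n) / 4\<rceil>"
  defines "q \<equiv> nat \<lceil>(3 * real n) / real m\<rceil>"
  shows "4 * m < 3 * n" "3 * n \<le> q * m" "q * m < 3 * n + m" "5 \<le> q"
proof -
  have r1: "real m < 3 * real n / 4" using hm unfolding less_ceiling_iff by simp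
  then show m4: "4 * m < 3 * n" by linarith
  define y where "y = 3 * real n / real m"
  have y0: "0 \<le> y" unfolding y_def by simp
  have cy: "of_int \<lceil>y\<rceil> - 1 < y" "y \<le> of_int \<lceil>y\<rceil>" using ceiling_correct[of y] by auto
  have cpos: "0 \<le> \<lceil>y\<rceil>" using y0 by simp
  have rq: "real q = of_int \<lceil>y\<rceil>" unfolding q_def y_def[symmetric] using cpos by simp
  have mpos: "0 < real m" using m0 by simp
  have ym: "y * real m = 3 * real n" unfolding y_def using mpos by simp
  have "y * real m \<le> real q * real m" using cy(2) rq mpos by (simp add: mult_right_mono)
  then have "3 * real n \<le> real (q * m)" using ym by simp
  then show "3 * n \<le> q * m" by linarith
  have "real q * real m < (y + 1) * real m" using cy(1) rq mpos by (simp add: mult_strict_right_mono)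
  then have "real (q * m) < 3 * real n + real m" using ym by (simp add: distrib_right)
  then show qm: "q * m < 3 * n + m" by linarith
  have "4 * m < q * m" using m4 \<open>3 * n \<le> q * m\<close> by linarith
  then have "4 < q" using m0 by simp
  then show "5 \<le> q" by simp
qed




lemma graph_facts:
  assumes sg: "simple_graph V E" and cub: "cubic V E"
  shows "finite E" "\<forall>e\<in>E. card e = 2" "\<forall>e\<in>E. e \<subseteq> V" "\<forall>v. card {e\<in>E. v \<in> e} \<le> 3"
    "\<forall>v\<in>V. card {e\<in>E. v \<in> e} = 3" "finite V"
proof -
  show fV: "finite V" using sg unfolding simple_graph_def by simp
  show sub: "\<forall>e\<in>E. e \<subseteq> V" using sg unfolding simple_graph_def by auto
  show "\<forall>e\<in>E. card e = 2" using sg unfolding simple_graph_def by auto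
  have "E \<subseteq> Pow V" using sub by auto
  then show "finite E" using fV finite_subset by blast
  show d3: "\<forall>v\<in>V. card {e\<in>E. v \<in> e} = 3" using cub unfolding cubic_def degree_def by simp
  show "\<forall>v. card {e\<in>E. v \<in> e} \<le> 3"
  proof
    fix v show "card {e\<in>E. v \<in> e} \<le> 3"
    proof (cases "v \<in> V")
      case True then show ?thesis using d3 by simp
    next
      case False
      have em: "{e\<in>E. v \<in> e} = {}" using sub False by auto
      show ?thesis unfolding em by simp
    qed
  qed
qed

lemma cover:
  fixes E :: "'a set set"
  assumes finE: "finite E" and two: "\<forall>e\<in>E. card e = 2" and deg: "\<forall>v. card {e\<in>E. v \<in> e} \<le> 3"
    and cE: "card E = 3 * n" and m4: "4 * m < 3 * n" and m0: "0 < m"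
    and q1: "3 * n \<le> q * m" and q2: "q * m < 3 * n + m" and q5: "5 \<le> q"
  shows "\<exists>F. finite F \<and> card F \<le> q \<and> (\<forall>M\<in>F. m_matching E m M) \<and> \<Union>F = E"
proof -
  obtain col where pr: "proper id E col" and bd: "\<forall>e\<in>E. col e < 4"
    using vizing3[OF finE two deg] by blast
  let ?cl = "\<lambda>c. {e\<in>E. col e = c}"
  have s4: "(\<Sum>c<4. card (?cl c)) = 3 * n" using sum_classes[OF finE bd] cE by simp
  have "\<exists>c0<4. 3 * n \<le> 4 * card (?cl c0)"
  proof (rule ccontr)
    assume "\<not> ?thesis"
    then have lt: "\<forall>c\<in>{..<4::nat}. 4 * card (?cl c) < 3 * n" by auto
    have ne4: "{..<(4::nat)} \<noteq> {}" using lessThan_empty_iff[of "4::nat"] by simp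
    have "(\<Sum>c\<in>{..<(4::nat)}. 4 * card (?cl c)) < (\<Sum>c\<in>{..<(4::nat)}. 3 * n)"
      by (rule sum_strict_mono[OF finite_lessThan ne4]) (use lt in auto)
    moreover have "(\<Sum>c<4. 4 * card (?cl c)) = 4 * (3 * n)" using s4 by (simp add: sum_distrib_left[symmetric])
    ultimately show False by simp
  qed
  then obtain c0 where c0: "c0 < 4" "3 * n \<le> 4 * card (?cl c0)" by blast
  define r where "r = q * m - 3 * n"
  have rm: "r < m" unfolding r_def using q1 q2 by linarith
  have rcl: "r \<le> card (?cl c0)" using rm m4 c0(2) by linarith
  obtain D where D: "D \<subseteq> ?cl c0" "card D = r" "finite D"
    by (rule obtain_subset_with_card_n[OF rcl]) simp
  have DE: "D \<subseteq> E" using D(1) by auto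
  have Dcol: "\<forall>e\<in>D. col e = c0" using D(1) by auto
  define X where "X = (\<lambda>e. (e, False)) ` E \<union> (\<lambda>e. (e, True)) ` D"
  have finX: "finite X" unfolding X_def using finE D(3) by simp
  have cX: "card X = q * m"
  proof -
    have "card X = card ((\<lambda>e. (e, False)) ` E) + card ((\<lambda>e. (e, True)) ` D)"
      unfolding X_def using finE D(3) by (intro card_Un_disjoint) auto
    also have "\<dots> = card E + card D"
      by (simp add: card_image inj_on_def)
    finally show ?thesis using cE D(2) q1 unfolding r_def by simp
  qed
  have fstX: "fst ` X = E" unfolding X_def image_Un image_image using DE by auto
  have twoX: "\<forall>i\<in>X. card (fst i) = 2" using two fstX by auto
  define colH where "colH = (\<lambda>i::'a set \<times> bool. if snd i then 4 else col (fst i))"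
  have prH: "proper fst X colH"
    unfolding proper_def
  proof (intro ballI impI)
    fix i j assume i: "i \<in> X" and j: "j \<in> X" and ij: "adjc fst i j"
    obtain e b where ie: "i = (e, b)" by (cases i)
    obtain f b' where jf: "j = (f, b')" by (cases j)
    have "fst i \<in> E" "fst j \<in> E" using i j fstX by blast+
    then have eE: "e \<in> E" and fE: "f \<in> E" using ie jf by simp_all
    have int: "e \<inter> f \<noteq> {}" using ij ie jf unfolding adjc_def by simp
    have ne: "(e,b) \<noteq> (f,b')" using ij ie jf unfolding adjc_def by simp
    show "colH i \<noteq> colH j"
    proof (cases b)
      case bT: True
      show ?thesis
      proof (cases b')
        case True
        have eD: "e \<in> D" using i ie bT unfolding X_def by auto
        have fD: "f \<in> D" using j jf True unfolding X_def by auto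
        have "e \<noteq> f" using ne bT True by simp
        then have "adjc id e f" using int unfolding adjc_def by simp
        then have "col e \<noteq> col f" using pr eE fE unfolding proper_def by blast
        then show ?thesis using Dcol eD fD by simp
      next
        case False
        have "col f < 4" using bd fE by blast
        then show ?thesis using bT False ie jf unfolding colH_def by simp
      qed
    next
      case bF: False
      show ?thesis
      proof (cases b')
        case True
        have "col e < 4" using bd eE by blast
        then show ?thesis using bF True ie jf unfolding colH_def by simp
      next
        case False
        have "e \<noteq> f" using ne bF False by simp
        then have "adjc id e f" using int unfolding adjc_def by simp
        then have "col e \<noteq> col f" using pr eE fE unfolding proper_def by blast
        then show ?thesis using bF False ie jf unfolding colH_def by simp
      qed
    qed
  qed
  have bdH: "\<forall>i\<in>X. colH i < q"
  proof
    fix i assume "i \<in> X"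
    then have "fst i \<in> E" using fstX by auto
    then show "colH i < q" using bd q5 unfolding colH_def by (auto simp: less_le_trans)
  qed
  have cXle: "card X \<le> q * m" using cX by simp
  obtain col' where pr': "proper fst X col'" and bd': "\<forall>i\<in>X. col' i < q"
    and le: "\<forall>c<q. card {i\<in>X. col' i = c} \<le> m"
    using balance[OF finX twoX prH bdH cXle] by blast
  have sq: "(\<Sum>c<q. card {i\<in>X. col' i = c}) = q * m" using sum_classes[OF finX bd'] cX by simp
  have eqm: "card {i\<in>X. col' i = c} = m" if "c < q" for c
  proof (rule ccontr)
    assume "card {i\<in>X. col' i = c} \<noteq> m"
    then have "card {i\<in>X. col' i = c} < m" using le that by (meson le_neq_implies_less)
    then have "(\<Sum>c<q. card {i\<in>X. col' i = c}) < (\<Sum>c<q. m)"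
      using le that by (intro sum_strict_mono_ex1) auto
    then show False using sq by simp
  qed
  define M where "M = (\<lambda>c. fst ` {i\<in>X. col' i = c})"
  define F where "F = M ` {..<q}"
  have mm: "m_matching E m (M c)" if "c < q" for c
  proof -
    let ?C = "{i\<in>X. col' i = c}"
    have sub: "M c \<subseteq> E" unfolding M_def using fstX by auto
    have nadj: "\<not> adjc fst i j" if "i \<in> ?C" "j \<in> ?C" for i j
    proof
      assume "adjc fst i j"
      then have "col' i \<noteq> col' j" using pr' that unfolding proper_def by blast
      then show False using that by simp
    qed
    have disj: "\<forall>e\<in>M c. \<forall>f\<in>M c. e \<noteq> f \<longrightarrow> e \<inter> f = {}"
    proof (intro ballI impI)
      fix e f assume e: "e \<in> M c" and f: "f \<in> M c" and ef: "e \<noteq> f"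
      obtain i where i: "i \<in> ?C" "e = fst i" using e unfolding M_def by blast
      obtain j where j: "j \<in> ?C" "f = fst j" using f unfolding M_def by blast
      have "i \<noteq> j" using i j ef by auto
      then show "e \<inter> f = {}" using nadj[OF i(1) j(1)] i j unfolding adjc_def by auto
    qed
    have inj: "inj_on fst ?C"
    proof (rule inj_onI)
      fix i j assume i: "i \<in> ?C" and j: "j \<in> ?C" and eq: "fst i = fst j"
      show "i = j"
      proof (rule ccontr)
        assume "i \<noteq> j"
        moreover have "fst i \<noteq> {}" using twoX i by fastforce
        ultimately have "adjc fst i j" using eq unfolding adjc_def by simp
        then show False using nadj[OF i j] by simp
      qed
    qed
    have "card (M c) = m" unfolding M_def using card_image[OF inj] eqm[OF that] by simp
    then show ?thesis unfolding m_matching_def matching_def using sub disj by simp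
  qed
  have finF: "finite F" unfolding F_def by simp
  have cF: "card F \<le> q" unfolding F_def using card_image_le[of "{..<q}" M] by simp
  have UF: "\<Union>F = E"
  proof -
    have "\<Union>F = (\<Union>c\<in>{..<q}. fst ` {i\<in>X. col' i = c})" unfolding F_def M_def by simp
    also have "\<dots> = fst ` X" using bd' by auto
    finally show ?thesis using fstX by simp
  qed
  show ?thesis using finF cF UF mm unfolding F_def by blast
qed

theorem proposition1:
  fixes V :: "'a set" and E :: "'a set set" and n m :: nat
  assumes "simple_graph V E" and "connected_graph V E" and "cubic V E"
    and "card V = 2 * n"
    and "0 < m"
    and "int m < \<lceil>(3 * real n) / 4\<rceil>"
  shows "excessive_index E m = enat (nat \<lceil>(3 * real n) / real m\<rceil>)"
proof -
  note gf = graph_facts[OF assms(1) assms(3)]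
  define q where "q = nat \<lceil>(3 * real n) / real m\<rceil>"
  note ar = arith_facts[OF assms(5) assms(6), folded q_def]
  have dc: "(\<Sum>i\<in>E. card (id i)) = (\<Sum>v\<in>V. card {i\<in>E. v \<in> id i})"
    apply (rule double_count)
    using gf(1) gf(6) gf(3) by auto
  have s2: "(\<Sum>i\<in>E. card (id i)) = (\<Sum>i\<in>E. 2)" using gf(2) by (intro sum.cong) auto
  have hs: "2 * card E = (\<Sum>v\<in>V. card {e\<in>E. v \<in> e})"
    using dc s2 by simp
  also have "\<dots> = (\<Sum>v\<in>V. 3)" using gf(5) by (intro sum.cong) auto
  also have "\<dots> = 3 * card V" by simp
  finally have cE: "card E = 3 * n" using assms(4) by simp
  obtain F where F: "finite F" "card F \<le> q" "\<forall>M\<in>F. m_matching E m M" "\<Union>F = E"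
    using cover[OF gf(1) gf(2) gf(4) cE ar(1) assms(5) ar(2) ar(3) ar(4)] by blast
  have cov: "\<not> (\<exists>e\<in>E. \<not> (\<exists>M. m_matching E m M \<and> e \<in> M))"
  proof
    assume "\<exists>e\<in>E. \<not> (\<exists>M. m_matching E m M \<and> e \<in> M)"
    then obtain e where e: "e \<in> E" "\<not> (\<exists>M. m_matching E m M \<and> e \<in> M)" by blast
    have "e \<in> \<Union>F" using F(4) e(1) by simp
    then obtain M where "M \<in> F" "e \<in> M" by (rule UnionE)
    then show False using e F(3) by blast
  qed
  define P where "P = (\<lambda>k. \<exists>\<F>. finite \<F> \<and> card \<F> = k \<and> (\<forall>M\<in>\<F>. m_matching E m M) \<and> \<Union>\<F> = E)"
  have lower: "q \<le> k" if Pk: "P k" for k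
  proof -
    obtain G where G: "finite G" "card G = k" "\<forall>M\<in>G. m_matching E m M" "\<Union>G = E"
      using Pk unfolding P_def by blast
    have "card E \<le> sum card G" using card_Union_le_sum_card[of G] G(4) by simp
    also have "\<dots> = (\<Sum>M\<in>G. m)" using G(3) unfolding m_matching_def by simp
    also have "\<dots> = k * m" using G(2) by simp
    finally have "3 * n \<le> k * m" using cE by simp
    then have "q * m < k * m + m" using ar(3) by linarith
    then have "q * m < (k + 1) * m" by simp
    then have "q < k + 1" using mult_less_cancel2 by blast
    then show ?thesis by simp
  qed
  have PF: "P (card F)" unfolding P_def using F by blast
  have "card F = q" using lower[OF PF] F(2) by simp
  then have Pq: "P q" using PF by simp
  have L: "(LEAST k. P k) = q" by (rule Least_equality[of P q, OF Pq lower])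
  show ?thesis
    unfolding excessive_index_def using cov L unfolding P_def q_def by simp
qed


end
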